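(* Let $G=(I\cup C,E)$ be a split graph whose clique vertices are labelled $1,\dots,k$ so that conditions (i)–(iii) below hold, and let $w$ be the word constructed below. If $x,y\in V=I\cup C$ are adjacent in $G$, then $x$ and $y$ alternate in $w$.
   Context: Words: a word over a finite set $X$ is a finite sequence of elements of $X$; for a word $u$ and $S\subseteq X$, $u|_S$ is the subsequence of $u$ consisting of all occurrences of letters of $S$; $u^R$ is the reversal of $u$. Two letters $x,y$ alternate in $u$ if $u|_{\{x,y\}}$ is of the form $xyxy\cdots$ or $yxyx\cdots$ (of even or odd length); otherwise they do not alternate. For integers $a\le b$, $[a,b]=\{a,a+1,\dots,b\}$. Setting: $G=(I\cup C,E)$ is a split graph: $C$ induces a clique, $I$ induces an independent set, and $C$ is inclusion-wise maximal, i.e. no vertex of $I$ is adjacent to all vertices of $C$. The vertices of $C$ are labelled by $1,\dots,k$ where $k=|C|$, and for all $a,b\in I$: (i) either $N(a)=[1,m]\cup[n,k]$ for some $m<n$, or $N(a)=[l,r]$ for some $l\le r$; (ii) if $N(a)=[1,m]\cup[n,k]$ ($m<n$) and $N(b)=[l,r]$ ($l\le r$), then $l>m$ or $r<n$; (iii) if $N(a)=[1,m]\cup[n,k]$ and $N(b)=[1,m']\cup[n',k]$ ($m<n$, $m'<n'$), then $m'<n$ and $m<n'$. Let $B$ be the set of $a\in I$ whose neighbourhood is an integer interval $[l_a,r_a]$, and $A=I\setminus B$; for $a\in A$ write $N(a)=[1,m_a]\cup[n_a,k]$ with $m_a<n_a$. Construction of $w$: start with $p_1=p_2=p_3=12\cdots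 k$. Process the vertices of $I$ one at a time in an arbitrary fixed order; "replace $y$ in $p$ by $yx$" (resp. $xy$) means replacing the unique occurrence of the letter $y$ in $p$ by the two letters $yx$ (resp. $xy$). For $a\in A$: replace $m_a$ in $p_1$ by $m_a a$, and replace $n_a$ in $p_2$ by $a n_a$. For $a\in B$: replace $l_a$ in $p_1$ by $a l_a$, and replace $r_a$ in $p_2$ by $r_a a$. After all vertices of $I$ are processed, let $d=\max(\{1\}\cup\{m_a: a\in A\})$ and replace the letter $d$ in $p_3$ by the word $d\,(p_1|_A)^R$. Finally set $w=p_1\,(p_1|_B)^R\,p_2\,p_3$ (a $3$-uniform word over $V$). *)

theory Defs
  imports Main
begin

definition alternate :: "'v list \<Rightarrow> 'v \<Rightarrow> 'v \<Rightarrow> bool" where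
  "alternate u x y \<longleftrightarrow>
     (let v = filter (\<lambda>z. z = x \<or> z = y) u in
        (\<forall>i<length v. v ! i = (if even i then x else y)) \<or>
        (\<forall>i<length v. v ! i = (if even i then y else x)))"

definition replace_letter :: "'v \<Rightarrow> 'v list \<Rightarrow> 'v list \<Rightarrow> 'v list" where
  "replace_letter y s p = concat (map (\<lambda>z. if z = y then s else [z]) p)"

definition split_graph :: "'v set \<Rightarrow> 'v set \<Rightarrow> ('v \<Rightarrow> 'v \<Rightarrow> bool) \<Rightarrow> bool" where
  "split_graph I C E \<longleftrightarrow>
     I \<inter> C = {} \<and>
     (\<forall>x y. E x y \<longrightarrow> E y x) \<and> (\<forall>x. \<not> E x x) \<and>
     (\<forall>x y. E x y \<longrightarrow> x \<in> I \<union> C \<and> y \<in> I \<union> C) \<and>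
     (\<forall>x\<in>C. \<forall>y\<in>C. x \<noteq> y \<longrightarrow> E x y) \<and>
     (\<forall>x\<in>I. \<forall>y\<in>I. \<not> E x y)"

definition nbr_idx :: "('v \<Rightarrow> 'v \<Rightarrow> bool) \<Rightarrow> (nat \<Rightarrow> 'v) \<Rightarrow> nat \<Rightarrow> 'v \<Rightarrow> nat set" where
  "nbr_idx E lab k a = {i \<in> {1..k}. E a (lab i)}"

definition Bset :: "'v set \<Rightarrow> ('v \<Rightarrow> 'v \<Rightarrow> bool) \<Rightarrow> (nat \<Rightarrow> 'v) \<Rightarrow> nat \<Rightarrow> 'v set" where
  "Bset I E lab k = {a \<in> I. \<exists>l r. l \<le> r \<and> nbr_idx E lab k a = {l..r}}"

definition Aset :: "'v set \<Rightarrow> ('v \<Rightarrow> 'v \<Rightarrow> bool) \<Rightarrow> (nat \<Rightarrow> 'v) \<Rightarrow> nat \<Rightarrow> 'v set" where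
  "Aset I E lab k = I - Bset I E lab k"

definition l_of :: "('v \<Rightarrow> 'v \<Rightarrow> bool) \<Rightarrow> (nat \<Rightarrow> 'v) \<Rightarrow> nat \<Rightarrow> 'v \<Rightarrow> nat" where
  "l_of E lab k a = (THE l. \<exists>r. l \<le> r \<and> nbr_idx E lab k a = {l..r})"

definition r_of :: "('v \<Rightarrow> 'v \<Rightarrow> bool) \<Rightarrow> (nat \<Rightarrow> 'v) \<Rightarrow> nat \<Rightarrow> 'v \<Rightarrow> nat" where
  "r_of E lab k a = (THE r. \<exists>l. l \<le> r \<and> nbr_idx E lab k a = {l..r})"

definition m_of :: "('v \<Rightarrow> 'v \<Rightarrow> bool) \<Rightarrow> (nat \<Rightarrow> 'v) \<Rightarrow> nat \<Rightarrow> 'v \<Rightarrow> nat" where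
  "m_of E lab k a = (THE m. \<exists>n. m < n \<and> nbr_idx E lab k a = {1..m} \<union> {n..k})"

definition n_of :: "('v \<Rightarrow> 'v \<Rightarrow> bool) \<Rightarrow> (nat \<Rightarrow> 'v) \<Rightarrow> nat \<Rightarrow> 'v \<Rightarrow> nat" where
  "n_of E lab k a = (THE n. \<exists>m. m < n \<and> nbr_idx E lab k a = {1..m} \<union> {n..k})"

definition process_vertex ::
  "'v set \<Rightarrow> ('v \<Rightarrow> 'v \<Rightarrow> bool) \<Rightarrow> (nat \<Rightarrow> 'v) \<Rightarrow> nat \<Rightarrow> 'v \<Rightarrow> 'v list \<times> 'v list \<Rightarrow> 'v list \<times> 'v list" where
  "process_vertex I E lab k a p =
     (if a \<in> Aset I E lab k then
        (replace_letter (lab (m_of E lab k a)) [lab (m_of E lab k a), a] (fst p),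
         replace_letter (lab (n_of E lab k a)) [a, lab (n_of E lab k a)] (snd p))
      else
        (replace_letter (lab (l_of E lab k a)) [a, lab (l_of E lab k a)] (fst p),
         replace_letter (lab (r_of E lab k a)) [lab (r_of E lab k a), a] (snd p)))"

definition p12 :: "'v set \<Rightarrow> ('v \<Rightarrow> 'v \<Rightarrow> bool) \<Rightarrow> (nat \<Rightarrow> 'v) \<Rightarrow> nat \<Rightarrow> 'v list \<Rightarrow> 'v list \<times> 'v list" where
  "p12 I E lab k ord =
     fold (process_vertex I E lab k) ord (map lab [1..<k+1], map lab [1..<k+1])"

definition d_of :: "'v set \<Rightarrow> ('v \<Rightarrow> 'v \<Rightarrow> bool) \<Rightarrow> (nat \<Rightarrow> 'v) \<Rightarrow> nat \<Rightarrow> nat" where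
  "d_of I E lab k = Max ({1} \<union> m_of E lab k ` Aset I E lab k)"

definition word_w :: "'v set \<Rightarrow> ('v \<Rightarrow> 'v \<Rightarrow> bool) \<Rightarrow> (nat \<Rightarrow> 'v) \<Rightarrow> nat \<Rightarrow> 'v list \<Rightarrow> 'v list" where
  "word_w I E lab k ord =
     (let p1 = fst (p12 I E lab k ord);
          p2 = snd (p12 I E lab k ord);
          A = Aset I E lab k; B = Bset I E lab k;
          d = d_of I E lab k;
          p3 = replace_letter (lab d) (lab d # rev (filter (\<lambda>z. z \<in> A) p1)) (map lab [1..<k+1])
      in p1 @ rev (filter (\<lambda>z. z \<in> B) p1) @ p2 @ p3)"

end

theory Submission
  imports Defs
begin


lemma repl_pres: "filter Q s = filter Q [y] \<Longrightarrow> filter Q (replace_letter y s p) = filter Q p"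
  by (induction p) (auto simp: replace_letter_def)

lemma repl_set: "set (replace_letter y s p) \<subseteq> set p \<union> set s"
  by (induction p) (auto simp: replace_letter_def)

lemma repl_notin: "y \<notin> set p \<Longrightarrow> replace_letter y s p = p"
  by (induction p) (auto simp: replace_letter_def)

lemma repl_split: "y \<notin> set u \<Longrightarrow> y \<notin> set v \<Longrightarrow> replace_letter y s (u @ y # v) = u @ s @ v"
  using repl_notin[of y u s] repl_notin[of y v s] by (simp add: replace_letter_def)

lemma filter_upt_single: "filter (\<lambda>t. t = c) [lo..<hi] = (if lo \<le> c \<and> c < hi then [c] else [])"
  by (induction hi) auto

lemma filter_upt_two: "(i::nat) < j \<Longrightarrow> filter (\<lambda>t. t = i \<or> t = j) [lo..<hi] =
   (if lo \<le> i \<and> i < hi then [i] else []) @ (if lo \<le> j \<and> j < hi then [j] else [])"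
  by (induction hi) auto

lemma filter_map_lab: "inj_on lab K \<Longrightarrow> set xs \<subseteq> K \<Longrightarrow> c \<in> K \<Longrightarrow>
   filter (\<lambda>z. z = lab c) (map lab xs) = map lab (filter (\<lambda>t. t = c) xs)"
  by (induction xs) (auto dest: inj_onD)

lemma filter_split: "P y \<Longrightarrow> filter P p = xs @ y # zs \<Longrightarrow>
   \<exists>u v. p = u @ y # v \<and> filter P u = xs \<and> filter P v = zs"
proof (induction xs arbitrary: p)
  case Nil
  then show ?case by (auto dest!: filter_eq_ConsD simp: filter_empty_conv)
next
  case (Cons x xs)
  from Cons.prems(2) obtain us vs where "p = us @ x # vs" "\<forall>u\<in>set us. \<not> P u" "P x"
     "xs @ y # zs = filter P vs" by (auto dest!: filter_eq_ConsD)
  with Cons.IH[of vs] Cons.prems(1) obtain u v where "vs = u @ y # v" "filter P u = xs" "filter P v = zs"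
    by auto
  with \<open>p = _\<close> \<open>\<forall>u\<in>set us. \<not> P u\<close> \<open>P x\<close> show ?case
    by (intro exI[of _ "us @ x # u"] exI[of _ v]) auto
qed




lemma decomp:
  assumes f: "filter (\<lambda>z. z \<in> lab ` {1..k}) p = map lab [1..<k+1]" and j: "j \<in> {1..k}"
  shows "\<exists>u v. p = u @ lab j # v \<and> filter (\<lambda>z. z \<in> lab ` {1..k}) u = map lab [1..<j]
     \<and> filter (\<lambda>z. z \<in> lab ` {1..k}) v = map lab [Suc j..<k+1]"
proof -
  have "[1..<k+1] = [1..<j] @ j # [Suc j..<k+1]"
    using j by (metis atLeastAtMost_iff le_imp_less_Suc less_imp_le_nat upt_add_eq_append upt_conv_Cons Suc_eq_plus1 add.commute nat_le_iff_add)
  then have "map lab [1..<k+1] = map lab [1..<j] @ lab j # map lab [Suc j..<k+1]" by simp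
  with f j show ?thesis by (intro filter_split) auto
qed

lemma filter_upt_lab:
  assumes inj: "inj_on lab {1..k}" and c: "c \<in> {1..k}" and sub: "lo \<ge> 1" "hi \<le> k + 1"
    and fu: "filter (\<lambda>z. z \<in> lab ` {1..k}) u = map lab [lo..<hi]" and a: "a \<notin> set u"
  shows "filter (\<lambda>z. z = a \<or> z = lab c) u = (if lo \<le> c \<and> c < hi then [lab c] else [])"
proof -
  have "filter (\<lambda>z. z = a \<or> z = lab c) u = filter (\<lambda>z. z = lab c) u"
    using a by (intro filter_cong) auto
  also have "\<dots> = filter (\<lambda>z. z = lab c) (filter (\<lambda>z. z \<in> lab ` {1..k}) u)"
    using c by (simp, intro filter_cong) auto
  also have "\<dots> = map lab (filter (\<lambda>t. t = c) [lo..<hi])"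
    unfolding fu using inj c sub by (intro filter_map_lab) auto
  finally show ?thesis by (simp add: filter_upt_single)
qed

lemma ins_filter:
  assumes f: "filter (\<lambda>z. z \<in> lab ` {1..k}) p = map lab [1..<k+1]" and inj: "inj_on lab {1..k}"
    and j: "j \<in> {1..k}" and c: "c \<in> {1..k}" and ap: "a \<notin> set p" and aC: "a \<notin> lab ` {1..k}"
  shows "filter (\<lambda>z. z = a \<or> z = lab c) (replace_letter (lab j) (s1 @ lab j # s2) p) =
    (if c < j then [lab c] else []) @ filter (\<lambda>z. z = a \<or> z = lab c) s1 @ (if c = j then [lab c] else [])
     @ filter (\<lambda>z. z = a \<or> z = lab c) s2 @ (if j < c then [lab c] else [])"
proof -
  obtain u v where p: "p = u @ lab j # v" and fu: "filter (\<lambda>z. z \<in> lab ` {1..k}) u = map lab [1..<j]"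
    and fv: "filter (\<lambda>z. z \<in> lab ` {1..k}) v = map lab [Suc j..<k+1]"
    using decomp[OF f j] by blast
  have "lab j \<notin> set u"
  proof
    assume "lab j \<in> set u"
    then have "lab j \<in> set (filter (\<lambda>z. z \<in> lab ` {1..k}) u)" using j by auto
    then obtain i where "i \<in> {1..<j}" "lab j = lab i" unfolding fu by auto
    with inj j show False by (auto dest: inj_onD)
  qed
  moreover have "lab j \<notin> set v"
  proof
    assume "lab j \<in> set v"
    then have "lab j \<in> set (filter (\<lambda>z. z \<in> lab ` {1..k}) v)" using j by auto
    then obtain i where "i \<in> {Suc j..<k+1}" "lab j = lab i" unfolding fv by (simp only: set_map set_upt) blast
    with inj j show False by (auto dest: inj_onD)
  qed
  ultimately have r: "replace_letter (lab j) (s1 @ lab j # s2) p = u @ s1 @ lab j # s2 @ v"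
    unfolding p by (simp add: repl_split)
  have 1: "filter (\<lambda>z. z = a \<or> z = lab c) u = (if 1 \<le> c \<and> c < j then [lab c] else [])"
    using filter_upt_lab[OF inj c _ _ fu] ap j p by auto
  have 2: "filter (\<lambda>z. z = a \<or> z = lab c) v = (if Suc j \<le> c \<and> c < k+1 then [lab c] else [])"
    using filter_upt_lab[OF inj c _ _ fv] ap j p by auto
  have 3: "(lab j = a \<or> lab j = lab c) = (j = c)"
    using aC j c inj by (auto dest: inj_onD)
  show ?thesis unfolding r using 1 2 3 c by auto
qed




definition E1 where "E1 I E lab k a c = (if a \<in> Aset I E lab k then
   (if c \<le> m_of E lab k a then [lab c, a] else [a, lab c])
   else (if c < l_of E lab k a then [lab c, a] else [a, lab c]))"

definition E2 where "E2 I E lab k a c = (if a \<in> Aset I E lab k then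
   (if c < n_of E lab k a then [lab c, a] else [a, lab c])
   else (if c \<le> r_of E lab k a then [lab c, a] else [a, lab c]))"

definition inv12 where "inv12 I E lab k P pp \<longleftrightarrow>
  filter (\<lambda>z. z \<in> lab ` {1..k}) (fst pp) = map lab [1..<k+1] \<and>
  filter (\<lambda>z. z \<in> lab ` {1..k}) (snd pp) = map lab [1..<k+1] \<and>
  set (fst pp) \<subseteq> lab ` {1..k} \<union> P \<and> set (snd pp) \<subseteq> lab ` {1..k} \<union> P \<and>
  (\<forall>a\<in>P. \<forall>c\<in>{1..k}. filter (\<lambda>z. z = a \<or> z = lab c) (fst pp) = E1 I E lab k a c \<and>
      filter (\<lambda>z. z = a \<or> z = lab c) (snd pp) = E2 I E lab k a c)"

lemma inv_step:
  assumes inv12: "inv12 I E lab k P pp" and b: "b \<in> I" "b \<notin> P"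
    and inj: "inj_on lab {1..k}" and disj: "I \<inter> lab ` {1..k} = {}"
    and rng: "\<forall>b\<in>I. (b \<in> Aset I E lab k \<longrightarrow> m_of E lab k b \<in> {1..k} \<and> n_of E lab k b \<in> {1..k}) \<and>
                (b \<notin> Aset I E lab k \<longrightarrow> l_of E lab k b \<in> {1..k} \<and> r_of E lab k b \<in> {1..k})"
  shows "inv12 I E lab k (insert b P) (process_vertex I E lab k b pp)"
proof -
  obtain p1 p2 where pp: "pp = (p1, p2)" by force
  have bC: "b \<notin> lab ` {1..k}" using b disj by auto
  have bp1: "b \<notin> set p1" and bp2: "b \<notin> set p2" using inv12 b bC unfolding inv12_def pp by auto
  have f1: "filter (\<lambda>z. z \<in> lab ` {1..k}) p1 = map lab [1..<k+1]"
   and f2: "filter (\<lambda>z. z \<in> lab ` {1..k}) p2 = map lab [1..<k+1]"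
   and s1: "set p1 \<subseteq> lab ` {1..k} \<union> P" and s2: "set p2 \<subseteq> lab ` {1..k} \<union> P"
   and old: "\<And>a c. a \<in> P \<Longrightarrow> c \<in> {1..k} \<Longrightarrow> filter (\<lambda>z. z = a \<or> z = lab c) p1 = E1 I E lab k a c \<and>
      filter (\<lambda>z. z = a \<or> z = lab c) p2 = E2 I E lab k a c"
    using inv12 unfolding inv12_def pp by auto
  show ?thesis
  proof (cases "b \<in> Aset I E lab k")
    case True
    define m where "m = m_of E lab k b"
    define n where "n = n_of E lab k b"
    have m: "m \<in> {1..k}" and n: "n \<in> {1..k}" using rng b True m_def n_def by auto
    have pv: "process_vertex I E lab k b pp = (replace_letter (lab m) [lab m, b] p1,
        replace_letter (lab n) [b, lab n] p2)"
      unfolding process_vertex_def pp m_def n_def using True by simp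
    show ?thesis unfolding inv12_def pv fst_conv snd_conv
    proof (intro conjI ballI)
      show "filter (\<lambda>z. z \<in> lab ` {1..k}) (replace_letter (lab m) [lab m, b] p1) = map lab [1..<k+1]"
        using f1 bC m by (subst repl_pres) auto
      show "filter (\<lambda>z. z \<in> lab ` {1..k}) (replace_letter (lab n) [b, lab n] p2) = map lab [1..<k+1]"
        using f2 bC n by (subst repl_pres) auto
      show "set (replace_letter (lab m) [lab m, b] p1) \<subseteq> lab ` {1..k} \<union> insert b P"
        using repl_set[of "lab m" "[lab m, b]" p1] s1 m by auto
      show "set (replace_letter (lab n) [b, lab n] p2) \<subseteq> lab ` {1..k} \<union> insert b P"
        using repl_set[of "lab n" "[b, lab n]" p2] s2 n by auto
    next
      fix a c assume a: "a \<in> insert b P" and c: "c \<in> {1..k}"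
      show "filter (\<lambda>z. z = a \<or> z = lab c) (replace_letter (lab m) [lab m, b] p1) = E1 I E lab k a c"
      proof (cases "a = b")
        case True
        then show ?thesis using ins_filter[OF f1 inj m c bp1 bC, of "[]" "[b]"] \<open>b \<in> Aset I E lab k\<close>
          unfolding E1_def m_def by auto
      next
        case False
        then have "a \<in> P" using a by auto
        moreover have "b \<noteq> lab c" using bC c by auto
        ultimately show ?thesis using old[of a c] c False by (subst repl_pres) auto
      qed
      show "filter (\<lambda>z. z = a \<or> z = lab c) (replace_letter (lab n) [b, lab n] p2) = E2 I E lab k a c"
      proof (cases "a = b")
        case True
        then show ?thesis using ins_filter[OF f2 inj n c bp2 bC, of "[b]" "[]"] \<open>b \<in> Aset I E lab k\<close>
          unfolding E2_def n_def by auto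
      next
        case False
        then have "a \<in> P" using a by auto
        moreover have "b \<noteq> lab c" using bC c by auto
        ultimately show ?thesis using old[of a c] c False by (subst repl_pres) auto
      qed
    qed
  next
    case False
    define m where "m = l_of E lab k b"
    define n where "n = r_of E lab k b"
    have m: "m \<in> {1..k}" and n: "n \<in> {1..k}" using rng b False m_def n_def by auto
    have pv: "process_vertex I E lab k b pp = (replace_letter (lab m) [b, lab m] p1,
        replace_letter (lab n) [lab n, b] p2)"
      unfolding process_vertex_def pp m_def n_def using False by simp
    show ?thesis unfolding inv12_def pv fst_conv snd_conv
    proof (intro conjI ballI)
      show "filter (\<lambda>z. z \<in> lab ` {1..k}) (replace_letter (lab m) [b, lab m] p1) = map lab [1..<k+1]"
        using f1 bC m by (subst repl_pres) auto
      show "filter (\<lambda>z. z \<in> lab ` {1..k}) (replace_letter (lab n) [lab n, b] p2) = map lab [1..<k+1]"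
        using f2 bC n by (subst repl_pres) auto
      show "set (replace_letter (lab m) [b, lab m] p1) \<subseteq> lab ` {1..k} \<union> insert b P"
        using repl_set[of "lab m" "[b, lab m]" p1] s1 m by auto
      show "set (replace_letter (lab n) [lab n, b] p2) \<subseteq> lab ` {1..k} \<union> insert b P"
        using repl_set[of "lab n" "[lab n, b]" p2] s2 n by auto
    next
      fix a c assume a: "a \<in> insert b P" and c: "c \<in> {1..k}"
      show "filter (\<lambda>z. z = a \<or> z = lab c) (replace_letter (lab m) [b, lab m] p1) = E1 I E lab k a c"
      proof (cases "a = b")
        case True
        then show ?thesis using ins_filter[OF f1 inj m c bp1 bC, of "[b]" "[]"] \<open>b \<notin> Aset I E lab k\<close>
          unfolding E1_def m_def by auto
      next
        case False
        then have "a \<in> P" using a by auto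
        moreover have "b \<noteq> lab c" using bC c by auto
        ultimately show ?thesis using old[of a c] c False by (subst repl_pres) auto
      qed
      show "filter (\<lambda>z. z = a \<or> z = lab c) (replace_letter (lab n) [lab n, b] p2) = E2 I E lab k a c"
      proof (cases "a = b")
        case True
        then show ?thesis using ins_filter[OF f2 inj n c bp2 bC, of "[]" "[b]"] \<open>b \<notin> Aset I E lab k\<close>
          unfolding E2_def n_def by auto
      next
        case False
        then have "a \<in> P" using a by auto
        moreover have "b \<noteq> lab c" using bC c by auto
        ultimately show ?thesis using old[of a c] c False by (subst repl_pres) auto
      qed
    qed
  qed
qed

lemma inv_fold:
  assumes "inv12 I E lab k P pp" "distinct xs" "set xs \<subseteq> I" "set xs \<inter> P = {}"
    and inj: "inj_on lab {1..k}" and disj: "I \<inter> lab ` {1..k} = {}"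
    and rng: "\<forall>b\<in>I. (b \<in> Aset I E lab k \<longrightarrow> m_of E lab k b \<in> {1..k} \<and> n_of E lab k b \<in> {1..k}) \<and>
                (b \<notin> Aset I E lab k \<longrightarrow> l_of E lab k b \<in> {1..k} \<and> r_of E lab k b \<in> {1..k})"
  shows "inv12 I E lab k (P \<union> set xs) (fold (process_vertex I E lab k) xs pp)"
  using assms(1-4)
proof (induction xs arbitrary: P pp)
  case Nil
  then show ?case by simp
next
  case (Cons b xs)
  have "inv12 I E lab k (insert b P) (process_vertex I E lab k b pp)"
    using inv_step[OF Cons.prems(1) _ _ inj disj rng] Cons.prems by auto
  from Cons.IH[OF this] Cons.prems show ?case by auto
qed




lemma six: "(i::nat) < 6 \<Longrightarrow> i = 0 \<or> i = 1 \<or> i = 2 \<or> i = 3 \<or> i = 4 \<or> i = 5"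
  by auto

lemma alt6: "filter (\<lambda>z. z = x \<or> z = y) u = [x,y,x,y,x,y] \<or> filter (\<lambda>z. z = x \<or> z = y) u = [y,x,y,x,y,x]
   \<Longrightarrow> alternate u x y"
  unfolding alternate_def Let_def
proof (elim disjE)
  assume h: "filter (\<lambda>z. z = x \<or> z = y) u = [x,y,x,y,x,y]"
  show "(\<forall>i<length (filter (\<lambda>z. z = x \<or> z = y) u). filter (\<lambda>z. z = x \<or> z = y) u ! i = (if even i then x else y)) \<or>
    (\<forall>i<length (filter (\<lambda>z. z = x \<or> z = y) u). filter (\<lambda>z. z = x \<or> z = y) u ! i = (if even i then y else x))"
    unfolding h
  proof (rule disjI1, intro allI impI)
    fix i assume "i < length [x,y,x,y,x,y]" then have "i < 6" by simp
    then show "[x,y,x,y,x,y] ! i = (if even i then x else y)" using six[of i] by auto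
  qed
next
  assume h: "filter (\<lambda>z. z = x \<or> z = y) u = [y,x,y,x,y,x]"
  show "(\<forall>i<length (filter (\<lambda>z. z = x \<or> z = y) u). filter (\<lambda>z. z = x \<or> z = y) u ! i = (if even i then x else y)) \<or>
    (\<forall>i<length (filter (\<lambda>z. z = x \<or> z = y) u). filter (\<lambda>z. z = x \<or> z = y) u ! i = (if even i then y else x))"
    unfolding h
  proof (rule disjI2, intro allI impI)
    fix i assume "i < length [y,x,y,x,y,x]" then have "i < 6" by simp
    then show "[y,x,y,x,y,x] ! i = (if even i then y else x)" using six[of i] by auto
  qed
qed

lemma alt_sym: "alternate u x y = alternate u y x"
proof -
  have "(\<lambda>z. z = x \<or> z = y) = (\<lambda>z. z = y \<or> z = x)" by auto
  show ?thesis unfolding alternate_def Let_def \<open>(\<lambda>z. z = x \<or> z = y) = (\<lambda>z. z = y \<or> z = x)\<close>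
    by (rule disj_commute)
qed

lemma filter_rev_filter: "filter Q (rev (filter P p)) = rev (filter P (filter Q p))"
  by (induction p) auto

lemma uniqA: assumes "{1..m} \<union> {n..k} = {1..m'} \<union> {n'..(k::nat)}" "1\<le>m" "m+1<n" "n\<le>k" "m'<n'"
  shows "m'=m \<and> n'=n"
proof -
  have h: "\<And>x. (1\<le>x \<and> x\<le>m \<or> n\<le>x \<and> x\<le>k) \<longleftrightarrow> (1\<le>x\<and>x\<le>m' \<or> n'\<le>x\<and>x\<le>k)"
    using assms(1) by (auto simp: set_eq_iff)
  have "\<not> m < m'"
  proof
    assume "m < m'" then show False using h[of "m+1"] assms(2-5) by simp
  qed
  moreover have "\<not> m' < m"
  proof
    assume "m' < m"
    then have "n' \<le> m'+1" using h[of "m'+1"] assms(2-5) by simp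
    then show False using h[of "m+1"] assms(2-5) \<open>m' < m\<close> by simp
  qed
  ultimately have mm: "m' = m" by simp
  have "\<not> n < n'"
  proof
    assume "n < n'" then show False using h[of "n"] assms(2-5) mm by simp
  qed
  moreover have "\<not> n' < n"
  proof
    assume "n' < n" then show False using h[of "n'"] assms(2-5) mm by simp
  qed
  ultimately show ?thesis using mm by simp
qed

lemma A_props:
  assumes aI: "a \<in> I" and aA: "a \<in> Aset I E lab k"
    and ne: "nbr_idx E lab k a \<noteq> {}" and nf: "nbr_idx E lab k a \<noteq> {1..k}"
    and ci: "(\<exists>m n. m < n \<and> nbr_idx E lab k a = {1..m} \<union> {n..k})
                      \<or> (\<exists>l r. l \<le> r \<and> nbr_idx E lab k a = {l..r})"
  shows "nbr_idx E lab k a = {1..m_of E lab k a} \<union> {n_of E lab k a..k} \<and> 1 \<le> m_of E lab k a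
     \<and> m_of E lab k a + 1 < n_of E lab k a \<and> n_of E lab k a \<le> k"
proof -
  have nB: "\<not> (\<exists>l r. l \<le> r \<and> nbr_idx E lab k a = {l..r})"
    using aA aI unfolding Aset_def Bset_def by auto
  then obtain m n where mn: "m < n" "nbr_idx E lab k a = {1..m} \<union> {n..k}" using ci by blast
  have m1: "1 \<le> m"
  proof (rule ccontr)
    assume "\<not> 1 \<le> m" then have "m = 0" by simp
    then have "nbr_idx E lab k a = {n..k}" using mn by auto
    moreover have "n \<le> k" using ne calculation by auto
    ultimately show False using nB by blast
  qed
  have nk: "n \<le> k"
  proof (rule ccontr)
    assume "\<not> n \<le> k"
    then have "nbr_idx E lab k a = {1..m}" using mn by auto
    then show False using nB m1 by blast
  qed
  have mn1: "m + 1 < n"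
  proof (rule ccontr)
    assume "\<not> m + 1 < n" then have "n = m + 1" using mn by simp
    then have "nbr_idx E lab k a = {1..k}" using mn nk by auto
    then show False using nf by simp
  qed
  have U: "\<And>m' n'. m' < n' \<and> nbr_idx E lab k a = {1..m'} \<union> {n'..k} \<Longrightarrow> m' = m \<and> n' = n"
  proof -
    fix m' n' assume h: "m' < n' \<and> nbr_idx E lab k a = {1..m'} \<union> {n'..k}"
    then have "{1..m} \<union> {n..k} = {1..m'} \<union> {n'..k}" using mn by simp
    from uniqA[OF this m1 mn1 nk] h show "m' = m \<and> n' = n" by blast
  qed
  have e1: "m_of E lab k a = m" unfolding m_of_def
    by (rule the_equality) (use mn U in blast)+
  have e2: "n_of E lab k a = n" unfolding n_of_def
    by (rule the_equality) (use mn U in blast)+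
  show ?thesis unfolding e1 e2 using mn m1 nk mn1 by blast
qed

lemma B_props:
  assumes aI: "a \<in> I" and aB: "a \<notin> Aset I E lab k"
  shows "nbr_idx E lab k a = {l_of E lab k a..r_of E lab k a} \<and> 1 \<le> l_of E lab k a
     \<and> l_of E lab k a \<le> r_of E lab k a \<and> r_of E lab k a \<le> k"
proof -
  have "a \<in> Bset I E lab k" using aI aB unfolding Aset_def by blast
  then obtain l r where lr: "l \<le> r" "nbr_idx E lab k a = {l..r}"
    unfolding Bset_def by blast
  have e1: "l_of E lab k a = l" unfolding l_of_def
  proof (rule the_equality)
    show "\<exists>r'. l \<le> r' \<and> nbr_idx E lab k a = {l..r'}" by (rule exI[of _ r], rule conjI[OF lr(1) lr(2)])
    fix x assume "\<exists>r'. x \<le> r' \<and> nbr_idx E lab k a = {x..r'}"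
    then obtain r' where h: "x \<le> r'" "nbr_idx E lab k a = {x..r'}" by blast
    have "{l..r} = {x..r'}" by (rule trans[OF lr(2)[symmetric] h(2)])
    then show "x = l" using lr(1) by simp
  qed
  have e2: "r_of E lab k a = r" unfolding r_of_def
  proof (rule the_equality)
    show "\<exists>l'. l' \<le> r \<and> nbr_idx E lab k a = {l'..r}" by (rule exI[of _ l], rule conjI[OF lr(1) lr(2)])
    fix x assume "\<exists>l'. l' \<le> x \<and> nbr_idx E lab k a = {l'..x}"
    then obtain l' where h: "l' \<le> x" "nbr_idx E lab k a = {l'..x}" by blast
    have "{l..r} = {l'..x}" by (rule trans[OF lr(2)[symmetric] h(2)])
    then show "x = r" using lr(1) by simp
  qed
  have "l \<in> {l..r}" "r \<in> {l..r}" using lr(1) by auto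
  then have "l \<in> nbr_idx E lab k a" "r \<in> nbr_idx E lab k a" unfolding lr(2) .
  then have "1 \<le> l" "r \<le> k" unfolding nbr_idx_def by auto
  then show ?thesis unfolding e1 e2 by (intro conjI lr(2) lr(1))
qed




theorem lemma2:
  fixes I C :: "'v set" and E :: "'v \<Rightarrow> 'v \<Rightarrow> bool" and lab :: "nat \<Rightarrow> 'v"
    and k :: nat and ord :: "'v list" and x y :: 'v
  assumes split: "split_graph I C E"
    and maximal: "\<forall>a\<in>I. \<exists>c\<in>C. \<not> E a c"
    and labelling: "bij_betw lab {1..k} C"
    and nonempty_nbr: "\<forall>a\<in>I. nbr_idx E lab k a \<noteq> {}"
    and cond_i: "\<forall>a\<in>I. (\<exists>m n. m < n \<and> nbr_idx E lab k a = {1..m} \<union> {n..k})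
                      \<or> (\<exists>l r. l \<le> r \<and> nbr_idx E lab k a = {l..r})"
    and cond_ii: "\<forall>a\<in>Aset I E lab k. \<forall>b\<in>Bset I E lab k. \<forall>m n l r.
                    m < n \<longrightarrow> nbr_idx E lab k a = {1..m} \<union> {n..k} \<longrightarrow>
                    l \<le> r \<longrightarrow> nbr_idx E lab k b = {l..r} \<longrightarrow> l > m \<or> r < n"
    and cond_iii: "\<forall>a\<in>Aset I E lab k. \<forall>b\<in>Aset I E lab k. \<forall>m n m' n'.
                    m < n \<longrightarrow> nbr_idx E lab k a = {1..m} \<union> {n..k} \<longrightarrow>
                    m' < n' \<longrightarrow> nbr_idx E lab k b = {1..m'} \<union> {n'..k} \<longrightarrow> m' < n \<and> m < n'"
    and order: "distinct ord" "set ord = I"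
    and xV: "x \<in> I \<union> C" and yV: "y \<in> I \<union> C"
    and adj: "E x y"
  shows "alternate (word_w I E lab k ord) x y"
proof -
  have disjIC: "I \<inter> C = {}" and sym: "\<And>x y. E x y \<Longrightarrow> E y x" and irr: "\<And>x. \<not> E x x"
    and indep: "\<And>x y. x \<in> I \<Longrightarrow> y \<in> I \<Longrightarrow> \<not> E x y"
    using split unfolding split_graph_def by blast+
  have inj: "inj_on lab {1..k}" and CL: "lab ` {1..k} = C"
    using labelling by (auto simp: bij_betw_def)
  have disj: "I \<inter> lab ` {1..k} = {}" using disjIC CL by simp
  define L where "L = map lab [1..<k+1]"
  define A where "A = Aset I E lab k"
  define B where "B = Bset I E lab k"
  have AI: "A \<subseteq> I" and BI: "B \<subseteq> I" unfolding A_def B_def Aset_def Bset_def by auto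
  have nf: "\<And>a. a \<in> I \<Longrightarrow> nbr_idx E lab k a \<noteq> {1..k}"
  proof
    fix a assume a: "a \<in> I" and eq: "nbr_idx E lab k a = {1..k}"
    obtain c where c: "c \<in> C" "\<not> E a c" using maximal a by blast
    then obtain i where i: "i \<in> {1..k}" "c = lab i" using CL by blast
    then have "i \<in> nbr_idx E lab k a" using eq by simp
    then show False using c i unfolding nbr_idx_def by simp
  qed
  have Ap: "\<And>a. a \<in> I \<Longrightarrow> a \<in> A \<Longrightarrow> nbr_idx E lab k a = {1..m_of E lab k a} \<union> {n_of E lab k a..k} \<and> 1 \<le> m_of E lab k a
     \<and> m_of E lab k a + 1 < n_of E lab k a \<and> n_of E lab k a \<le> k"
  proof -
    fix a assume a: "a \<in> I" "a \<in> A"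
    show "?thesis a" by (rule A_props[OF a(1) a(2)[unfolded A_def] nonempty_nbr[rule_format, OF a(1)] nf[OF a(1)] cond_i[rule_format, OF a(1)]])
  qed
  have Bp: "\<And>a. a \<in> I \<Longrightarrow> a \<notin> A \<Longrightarrow> nbr_idx E lab k a = {l_of E lab k a..r_of E lab k a} \<and> 1 \<le> l_of E lab k a
     \<and> l_of E lab k a \<le> r_of E lab k a \<and> r_of E lab k a \<le> k"
  proof -
    fix a assume a: "a \<in> I" "a \<notin> A"
    show "?thesis a" by (rule B_props[OF a(1) a(2)[unfolded A_def]])
  qed
  have rng: "\<forall>b\<in>I. (b \<in> Aset I E lab k \<longrightarrow> m_of E lab k b \<in> {1..k} \<and> n_of E lab k b \<in> {1..k}) \<and>
                (b \<notin> Aset I E lab k \<longrightarrow> l_of E lab k b \<in> {1..k} \<and> r_of E lab k b \<in> {1..k})"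
  proof
    fix b assume b: "b \<in> I"
    show "(b \<in> Aset I E lab k \<longrightarrow> m_of E lab k b \<in> {1..k} \<and> n_of E lab k b \<in> {1..k}) \<and>
                (b \<notin> Aset I E lab k \<longrightarrow> l_of E lab k b \<in> {1..k} \<and> r_of E lab k b \<in> {1..k})"
      using Ap[OF b] Bp[OF b] unfolding A_def by auto
  qed
  have fL: "filter (\<lambda>z. z \<in> lab ` {1..k}) L = L" unfolding L_def by (auto intro: filter_True)
  have inv0: "inv12 I E lab k {} (L, L)"
    unfolding inv12_def using fL by (auto simp: L_def)
  have invI: "inv12 I E lab k I (p12 I E lab k ord)"
    using inv_fold[OF inv0 order(1) _ _ inj disj rng] order(2) unfolding p12_def L_def by simp
  define p1 where "p1 = fst (p12 I E lab k ord)"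
  define p2 where "p2 = snd (p12 I E lab k ord)"
  define d where "d = d_of I E lab k"
  have f1: "filter (\<lambda>z. z \<in> lab ` {1..k}) p1 = L" and f2: "filter (\<lambda>z. z \<in> lab ` {1..k}) p2 = L"
    and ep: "\<And>a c. a \<in> I \<Longrightarrow> c \<in> {1..k} \<Longrightarrow> filter (\<lambda>z. z = a \<or> z = lab c) p1 = E1 I E lab k a c \<and>
      filter (\<lambda>z. z = a \<or> z = lab c) p2 = E2 I E lab k a c"
    using invI unfolding inv12_def p1_def p2_def L_def by auto
  have wdef: "word_w I E lab k ord = p1 @ rev (filter (\<lambda>z. z \<in> B) p1) @ p2 @
      replace_letter (lab d) (lab d # rev (filter (\<lambda>z. z \<in> A) p1)) L"
    unfolding word_w_def Let_def p1_def p2_def A_def B_def d_def L_def by simp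
  have finA: "finite A" using AI order(2) finite_subset by blast
  have dge: "\<And>a. a \<in> A \<Longrightarrow> m_of E lab k a \<le> d"
    unfolding d_def d_of_def A_def[symmetric] using finA by (intro Max_ge) auto
  have d1: "1 \<le> d"
    unfolding d_def d_of_def A_def[symmetric] using finA by (intro Max_ge) auto
  have din: "d \<in> {1} \<union> m_of E lab k ` A"
    unfolding d_def d_of_def A_def[symmetric] using finA by (intro Max_in) auto
  have dk: "1 \<le> k \<Longrightarrow> d \<in> {1..k}"
    using din d1 Ap AI by fastforce
  have dlt: "\<And>a. a \<in> A \<Longrightarrow> d < n_of E lab k a"
  proof -
    fix a assume a: "a \<in> A"
    show "d < n_of E lab k a"
    proof (cases "d = 1")
      case True then show ?thesis using Ap[of a] a AI by force
    next
      case False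
      then obtain b where b: "b \<in> A" "d = m_of E lab k b" using din by auto
      have aI: "a \<in> I" and bI: "b \<in> I" using a b AI by auto
      have HA: "m_of E lab k a < n_of E lab k a" "nbr_idx E lab k a = {1..m_of E lab k a} \<union> {n_of E lab k a..k}"
        using Ap[OF aI a] by auto
      have HB: "m_of E lab k b < n_of E lab k b" "nbr_idx E lab k b = {1..m_of E lab k b} \<union> {n_of E lab k b..k}"
        using Ap[OF bI b(1)] by auto
      have "m_of E lab k b < n_of E lab k a \<and> m_of E lab k a < n_of E lab k b"
        by (rule cond_iii[unfolded A_def[symmetric], rule_format, OF a b(1) HA HB])
      then show ?thesis using b by simp
    qed
  qed
  have fC: "\<And>u. filter (\<lambda>z. z \<in> lab ` {1..k}) (rev (filter (\<lambda>z. z \<in> B) u)) = []"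
       "\<And>u. filter (\<lambda>z. z \<in> lab ` {1..k}) (rev (filter (\<lambda>z. z \<in> A) u)) = []"
    using AI BI disj by (auto simp: filter_empty_conv)
  define word where "word = word_w I E lab k ord"
  define p3 where "p3 = replace_letter (lab d) (lab d # rev (filter (\<lambda>z. z \<in> A) p1)) L"
  have w3: "\<And>P. filter P word = filter P p1 @ rev (filter (\<lambda>z. z \<in> B) (filter P p1)) @ filter P p2 @ filter P p3"
    unfolding word_def wdef p3_def by (simp add: filter_rev_filter)
  have CC: "\<And>i j. i \<in> {1..k} \<Longrightarrow> j \<in> {1..k} \<Longrightarrow> i < j \<Longrightarrow>
     filter (\<lambda>z. z = lab i \<or> z = lab j) word = [lab i, lab j, lab i, lab j, lab i, lab j]"
  proof -
    fix i j assume i: "i \<in> {1..k}" and j: "j \<in> {1..k}" and ij: "i < j"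
    define Q where "Q = (\<lambda>z. z = lab i \<or> z = lab j)"
    have k1: "1 \<le> k" using i by simp
    have red: "\<And>u. filter Q u = filter Q (filter (\<lambda>z. z \<in> lab ` {1..k}) u)"
      unfolding Q_def using i j by (simp, intro filter_cong) auto
    have f3: "filter (\<lambda>z. z \<in> lab ` {1..k}) p3 = L"
    proof -
      have "lab d \<in> lab ` {1..k}" using dk[OF k1] by simp
      then have "filter (\<lambda>z. z \<in> lab ` {1..k}) (lab d # rev (filter (\<lambda>z. z \<in> A) p1)) =
          filter (\<lambda>z. z \<in> lab ` {1..k}) [lab d]"
        using fC(2)[of p1] by simp
      then show ?thesis unfolding p3_def by (simp only: repl_pres fL)
    qed
    have "filter (\<lambda>t. Q (lab t)) [1..<k+1] = filter (\<lambda>t. t = i \<or> t = j) [1..<k+1]"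
      unfolding Q_def using i j inj by (intro filter_cong) (auto dest: inj_onD)
    then have fQL: "filter Q L = [lab i, lab j]"
      unfolding L_def filter_map using filter_upt_two[OF ij, of 1 "k+1"] i j by (simp add: comp_def)
    have "filter Q word = [lab i, lab j] @ [] @ [lab i, lab j] @ [lab i, lab j]"
    proof -
      have g1: "filter Q p1 = [lab i, lab j]" by (simp only: red[of p1] f1 fQL)
      have g2: "filter Q p2 = [lab i, lab j]" by (simp only: red[of p2] f2 fQL)
      have g3: "filter Q p3 = [lab i, lab j]" by (simp only: red[of p3] f3 fQL)
      have "lab i \<notin> B" "lab j \<notin> B" using BI disj i j by auto
      then show ?thesis unfolding w3 g1 g2 g3 by simp
    qed
    then show "filter (\<lambda>z. z = lab i \<or> z = lab j) word = [lab i, lab j, lab i, lab j, lab i, lab j]"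
      unfolding Q_def by simp
  qed
  have IC: "\<And>a c. a \<in> I \<Longrightarrow> c \<in> nbr_idx E lab k a \<Longrightarrow> alternate word a (lab c)"
  proof -
    fix a c assume a: "a \<in> I" and cn: "c \<in> nbr_idx E lab k a"
    have c: "c \<in> {1..k}" using cn unfolding nbr_idx_def by auto
    then have k1: "1 \<le> k" by simp
    have aC: "a \<notin> lab ` {1..k}" using a disj by auto
    have aL: "a \<notin> set L" using aC unfolding L_def by auto
    have lcA: "lab c \<notin> A" "lab c \<notin> B" using c AI BI disj by auto
    define Q where "Q = (\<lambda>z. z = a \<or> z = lab c)"
    have e: "filter Q p1 = E1 I E lab k a c" "filter Q p2 = E2 I E lab k a c"
      using ep[OF a c] unfolding Q_def by auto
    have e3: "filter Q p3 = (if c < d then [lab c] else []) @ (if c = d then [lab c] else [])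
      @ rev (filter (\<lambda>z. z \<in> A) (E1 I E lab k a c)) @ (if d < c then [lab c] else [])"
      using ins_filter[OF trans[OF fL L_def] inj dk[OF k1] c aL aC, of "[]" "rev (filter (\<lambda>z. z \<in> A) p1)"]
      unfolding p3_def Q_def[symmetric] filter_rev_filter e by simp
    have "filter Q word = [a, lab c, a, lab c, a, lab c] \<or> filter Q word = [lab c, a, lab c, a, lab c, a]"
    proof (cases "a \<in> A")
      case True
      note H = Ap[OF a True]
      have "c \<le> m_of E lab k a \<or> n_of E lab k a \<le> c" using cn H by auto
      moreover have "m_of E lab k a \<le> d" "d < n_of E lab k a" using dge dlt True by auto
      moreover have "a \<notin> B" using True unfolding A_def B_def Aset_def by auto
      ultimately show ?thesis unfolding w3 e e3 E1_def E2_def using True lcA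
        unfolding A_def[symmetric] by auto
    next
      case False
      note H = Bp[OF a False]
      have "a \<in> B" using a False unfolding A_def B_def Aset_def by auto
      moreover have "l_of E lab k a \<le> c" "c \<le> r_of E lab k a" using cn H by auto
      ultimately show ?thesis unfolding w3 e e3 E1_def E2_def using False lcA
        unfolding A_def[symmetric] by auto
    qed
    then show "alternate word a (lab c)" unfolding Q_def by (intro alt6)
  qed
  have xy: "x \<noteq> y" using adj irr by auto
  have "alternate word x y"
  proof (cases "x \<in> I")
    case True
    then have "y \<notin> I" using indep adj by auto
    then obtain c where c: "c \<in> {1..k}" "y = lab c" using yV CL by auto
    then have "c \<in> nbr_idx E lab k x" using adj unfolding nbr_idx_def by auto
    then show ?thesis using IC True c by auto
  next
    case False
    then obtain i where i: "i \<in> {1..k}" "x = lab i" using xV CL by auto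
    show ?thesis
    proof (cases "y \<in> I")
      case True
      then have "i \<in> nbr_idx E lab k y" using sym[OF adj] i unfolding nbr_idx_def by auto
      then show ?thesis using IC True i alt_sym by metis
    next
      case False
      then obtain j where j: "j \<in> {1..k}" "y = lab j" using yV CL by auto
      have "i \<noteq> j" using xy i j by auto
      then consider "i < j" | "j < i" by linarith
      then show ?thesis
      proof cases
        case 1 then show ?thesis using CC[OF i(1) j(1)] i j by (intro alt6) auto
      next
        case 2
        have "alternate word y x" using CC[OF j(1) i(1) 2] i j by (intro alt6) auto
        then show ?thesis using alt_sym by metis
      qed
    qed
  qed
then show ?thesis unfolding word_def .
qed


end
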